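(* Let $k\ge1$ and $n\ge0$ be integers. Every uniformly $k$-dense flag complex with at least $n(k+1)+1$ vertices is $(n,k)$-grounded.
   Context: A flag complex $X$ is uniformly $k$-dense if every vertex of $X$ is adjacent to all but at most $k$ other vertices. A simplex $\Delta$ of $X$ is a $k$-ground for $X$ if every vertex of $X$ is adjacent to all but at most $k$ vertices of $\Delta$; $X$ is $(n,k)$-grounded if it contains an $n$-simplex that is a $k$-ground for $X$. *)

theory Defs
  imports Main
begin

text \<open>A flag complex is the clique complex of a simple graph, given by a vertex set V
  and a symmetric irreflexive adjacency relation E on V.\<close>

definition simple_graph :: "'a set \<Rightarrow> ('a \<Rightarrow> 'a \<Rightarrow> bool) \<Rightarrow> bool" where
  "simple_graph V E \<longleftrightarrow> (\<forall>x y. E x y \<longrightarrow> x \<in> V \<and> y \<in> V \<and> x \<noteq> y \<and> E y x)"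

definition flag_complex :: "'a set \<Rightarrow> ('a \<Rightarrow> 'a \<Rightarrow> bool) \<Rightarrow> 'a set set" where
  "flag_complex V E = {S. S \<subseteq> V \<and> finite S \<and> S \<noteq> {} \<and> (\<forall>x\<in>S. \<forall>y\<in>S. x \<noteq> y \<longrightarrow> E x y)}"

definition is_simplex_dim :: "'a set \<Rightarrow> ('a \<Rightarrow> 'a \<Rightarrow> bool) \<Rightarrow> nat \<Rightarrow> 'a set \<Rightarrow> bool" where
  "is_simplex_dim V E n S \<longleftrightarrow> S \<in> flag_complex V E \<and> card S = n + 1"

definition uniformly_dense :: "'a set \<Rightarrow> ('a \<Rightarrow> 'a \<Rightarrow> bool) \<Rightarrow> nat \<Rightarrow> bool" where
  "uniformly_dense V E k \<longleftrightarrow> (\<forall>v\<in>V. card {w\<in>V. w \<noteq> v \<and> \<not> E v w} \<le> k)"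

definition k_ground :: "'a set \<Rightarrow> ('a \<Rightarrow> 'a \<Rightarrow> bool) \<Rightarrow> nat \<Rightarrow> 'a set \<Rightarrow> bool" where
  "k_ground V E k D \<longleftrightarrow> D \<in> flag_complex V E \<and>
     (\<forall>v\<in>V. card {w\<in>D. w \<noteq> v \<and> \<not> E v w} \<le> k)"

definition grounded :: "'a set \<Rightarrow> ('a \<Rightarrow> 'a \<Rightarrow> bool) \<Rightarrow> nat \<Rightarrow> nat \<Rightarrow> bool" where
  "grounded V E n k \<longleftrightarrow> (\<exists>D. is_simplex_dim V E n D \<and> k_ground V E k D)"

end

theory Submission
  imports Defs
begin

lemma clique_exists:
  assumes "finite V" "\<forall>x y. E x y \<longrightarrow> E y x"
    and "\<forall>v\<in>V. card {w\<in>V. w \<noteq> v \<and> \<not> E v w} \<le> k"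
    and "card V \<ge> m * (k + 1) + 1"
  shows "\<exists>S. S \<subseteq> V \<and> card S = m + 1 \<and> (\<forall>x\<in>S. \<forall>y\<in>S. x \<noteq> y \<longrightarrow> E x y)"
  using assms
proof (induction m arbitrary: V)
  case 0
  then obtain v where "v \<in> V" by fastforce
  then show ?case by (intro exI[of _ "{v}"]) auto
next
  case (Suc m)
  from Suc.prems(4) obtain v where v: "v \<in> V" by fastforce
  define N where "N = {w\<in>V. w \<noteq> v \<and> \<not> E v w}"
  define V' where "V' = {w\<in>V. w \<noteq> v \<and> E v w}"
  have cN: "card N \<le> k" using Suc.prems(3) v unfolding N_def by blast
  have Vu: "V = insert v (N \<union> V')" using v unfolding N_def V'_def by auto
  have fin: "finite N" "finite V'" using Suc.prems(1) unfolding N_def V'_def by auto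
  have "card V \<le> Suc (card (N \<union> V'))"
    unfolding Vu using fin by (simp add: card_insert_if)
  also have "card (N \<union> V') \<le> card N + card V'" by (rule card_Un_le)
  finally have "card V \<le> Suc (card N + card V')" by simp
  hence cV': "card V' \<ge> m * (k + 1) + 1" using Suc.prems(4) cN by simp
  have dense': "\<forall>u\<in>V'. card {w\<in>V'. w \<noteq> u \<and> \<not> E u w} \<le> k"
  proof
    fix u assume u: "u \<in> V'"
    hence "u \<in> V" unfolding V'_def by auto
    have "card {w\<in>V'. w \<noteq> u \<and> \<not> E u w} \<le> card {w\<in>V. w \<noteq> u \<and> \<not> E u w}"
      by (rule card_mono) (use Suc.prems(1) V'_def in auto)
    also have "\<dots> \<le> k" using Suc.prems(3) \<open>u \<in> V\<close> by blast
    finally show "card {w\<in>V'. w \<noteq> u \<and> \<not> E u w} \<le> k" .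
  qed
  obtain S where S: "S \<subseteq> V'" "card S = m + 1" "\<forall>x\<in>S. \<forall>y\<in>S. x \<noteq> y \<longrightarrow> E x y"
    using Suc.IH[OF fin(2) Suc.prems(2) dense' cV'] by blast
  have "v \<notin> S" using S(1) V'_def by auto
  moreover have "finite S" using S(1) fin(2) finite_subset by blast
  ultimately have "card (insert v S) = Suc m + 1" using S(2) by simp
  moreover have "insert v S \<subseteq> V" using S(1) v V'_def by auto
  moreover have "\<forall>x\<in>insert v S. \<forall>y\<in>insert v S. x \<noteq> y \<longrightarrow> E x y"
    using S(1,3) Suc.prems(2) V'_def by auto
  ultimately show ?case by blast
qed

theorem lemma4p12:
  fixes V :: "'a set" and E :: "'a \<Rightarrow> 'a \<Rightarrow> bool" and n k :: nat
  assumes "simple_graph V E"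
    and "finite V"
    and "k \<ge> 1"
    and "uniformly_dense V E k"
    and "card V \<ge> n * (k + 1) + 1"
  shows "grounded V E n k"
proof -
  have sym: "\<forall>x y. E x y \<longrightarrow> E y x" using assms(1) unfolding simple_graph_def by blast
  have d: "\<forall>v\<in>V. card {w\<in>V. w \<noteq> v \<and> \<not> E v w} \<le> k"
    using assms(4) unfolding uniformly_dense_def .
  obtain S where S: "S \<subseteq> V" "card S = n + 1" "\<forall>x\<in>S. \<forall>y\<in>S. x \<noteq> y \<longrightarrow> E x y"
    using clique_exists[OF assms(2) sym d assms(5)] by blast
  have fS: "finite S" using S(1) assms(2) finite_subset by blast
  have fc: "S \<in> flag_complex V E"
    unfolding flag_complex_def using S fS by auto
  have "\<forall>v\<in>V. card {w\<in>S. w \<noteq> v \<and> \<not> E v w} \<le> k"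
  proof
    fix v assume v: "v \<in> V"
    have "card {w\<in>S. w \<noteq> v \<and> \<not> E v w} \<le> card {w\<in>V. w \<noteq> v \<and> \<not> E v w}"
      by (rule card_mono) (use assms(2) S(1) in auto)
    thus "card {w\<in>S. w \<noteq> v \<and> \<not> E v w} \<le> k" using d v by fastforce
  qed
  thus ?thesis unfolding grounded_def is_simplex_dim_def k_ground_def using fc S(2) by blast
qed

end
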